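(* Let $L$ be a construction of an ASC-hypergraph $H$, let $Y\in L$ and put $Z=\bigcup H\setminus Y$. Then ${}_Z L$ is a construction of the ASC-hypergraph ${}_Z H$.
   Context: A hypergraph is a finite set $H$ of nonempty subsets of some finite set; its carrier is $\bigcup H$. For a family $F$ and set $Y$, $F_Y=\{X\in F\mid X\subseteq Y\}$, and ${}_Z F=\{X\cap Z\mid X\in F,\ X\cap Z\neq\emptyset\}$. A hypergraph partition of $H$ is a partition $\{H_1,\dots,H_n\}$ ($n\ge0$) of the set $H$ with $\{\bigcup H_1,\dots,\bigcup H_n\}$ a partition of $\bigcup H$; $H$ is connected if it has exactly one hypergraph partition; the finest hypergraph partition is the unique one whose blocks are connected. $H$ is atomic if $\{x\}\in H$ for all $x\in\bigcup H$; saturated if $X_1,X_2\in H$ with $X_1\cap X_2\neq\emptyset$ imply $X_1\cup X_2\in H$. An ASC-hypergraph is one that is atomic, saturated and connected. Constructions of an atomic $H$, by induction on $|\bigcup H|$: (0) $\emptyset$ is the only construction of $\emptyset$; (1) if $|\bigcup H|\ge1$, $H$ connected, $x\in\bigcup H$, $K$ a construction of $H_{\bigcup H\setminus\{x\}}$, then $K\cup\{\bigcup H\}$ is a construction of $H$; (2) if $H$ is not connected with finest hypergraph partition $\{H_1,\dots,H_n\}$, $n\ge2$, and $K_i$ is a construction of $H_i$, then $K_1\cup\dots\cup K_n$ is a construction of $H$. *)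

theory Defs
  imports Main "HOL-Library.Disjoint_Sets"
begin

definition hypergraph :: "'a set set \<Rightarrow> bool" where
  "hypergraph H \<longleftrightarrow> finite H \<and> (\<forall>X\<in>H. X \<noteq> {} \<and> finite X)"

definition restr :: "'a set set \<Rightarrow> 'a set \<Rightarrow> 'a set set" where
  "restr F Y = {X \<in> F. X \<subseteq> Y}"

text \<open>_Z F = {X inter Z | X in F, X inter Z nonempty}\<close>
definition trace :: "'a set \<Rightarrow> 'a set set \<Rightarrow> 'a set set" where
  "trace Z F = {X \<inter> Z | X. X \<in> F \<and> X \<inter> Z \<noteq> {}}"

definition hpartition :: "'a set set \<Rightarrow> 'a set set set \<Rightarrow> bool" where
  "hpartition H P \<longleftrightarrow> partition_on H P \<and> partition_on (\<Union>H) (Union ` P) \<and> inj_on Union P"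

definition hconnected :: "'a set set \<Rightarrow> bool" where
  "hconnected H \<longleftrightarrow> (\<exists>!P. hpartition H P)"

definition finest_hpartition :: "'a set set \<Rightarrow> 'a set set set \<Rightarrow> bool" where
  "finest_hpartition H P \<longleftrightarrow> hpartition H P \<and> (\<forall>Hi\<in>P. hconnected Hi)"

definition atomic :: "'a set set \<Rightarrow> bool" where
  "atomic H \<longleftrightarrow> (\<forall>x\<in>\<Union>H. {x} \<in> H)"

definition saturated :: "'a set set \<Rightarrow> bool" where
  "saturated H \<longleftrightarrow> (\<forall>X1\<in>H. \<forall>X2\<in>H. X1 \<inter> X2 \<noteq> {} \<longrightarrow> X1 \<union> X2 \<in> H)"

definition ASC :: "'a set set \<Rightarrow> bool" where
  "ASC H \<longleftrightarrow> hypergraph H \<and> atomic H \<and> saturated H \<and> hconnected H"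

inductive construction :: "'a set set \<Rightarrow> 'a set set \<Rightarrow> bool" where
  empty: "construction {} {}"
| conn: "\<lbrakk> hypergraph H; atomic H; hconnected H; x \<in> \<Union>H;
           construction (restr H (\<Union>H - {x})) K \<rbrakk>
         \<Longrightarrow> construction H (insert (\<Union>H) K)"
| split: "\<lbrakk> hypergraph H; atomic H; \<not> hconnected H; finest_hpartition H P; card P \<ge> 2;
            \<forall>Hi\<in>P. construction Hi (Kf Hi) \<rbrakk>
         \<Longrightarrow> construction H (\<Union>Hi\<in>P. Kf Hi)"

end

theory Submission
  imports Defs
begin

definition cdisj :: "'a set set set \<Rightarrow> bool" where
  "cdisj P \<longleftrightarrow> (\<forall>B\<in>P. \<forall>C\<in>P. B \<noteq> C \<longrightarrow> \<Union>B \<inter> \<Union>C = {})"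

lemma hpart_props:
  assumes "hpartition G P"
  shows "\<Union>P = G" "\<And>B. B \<in> P \<Longrightarrow> B \<noteq> {}" "cdisj P"
proof -
  have p1: "partition_on G P" and p2: "partition_on (\<Union>G) (Union ` P)" and ij: "inj_on Union P"
    using assms by (auto simp: hpartition_def)
  show "\<Union>P = G" using p1 by (auto simp: partition_on_def)
  show "\<And>B. B \<in> P \<Longrightarrow> B \<noteq> {}" using p1 by (auto simp: partition_on_def)
  show "cdisj P" unfolding cdisj_def
  proof (intro ballI impI)
    fix B C assume "B \<in> P" "C \<in> P" "B \<noteq> C"
    then have "\<Union>B \<noteq> \<Union>C" using ij by (auto simp: inj_on_def)
    then show "\<Union>B \<inter> \<Union>C = {}" using p2 \<open>B \<in> P\<close> \<open>C \<in> P\<close>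
      by (auto simp: partition_on_def pairwise_def disjnt_def)
  qed
qed

lemma hpart_intro:
  assumes "hypergraph G" "\<Union>P = G" "\<And>B. B \<in> P \<Longrightarrow> B \<noteq> {}" "cdisj P"
  shows "hpartition G P"
proof -
  have ne: "\<And>X. X \<in> G \<Longrightarrow> X \<noteq> {}" using assms(1) by (auto simp: hypergraph_def)
  have uB: "\<And>B. B \<in> P \<Longrightarrow> \<Union>B \<noteq> {}"
  proof -
    fix B assume "B \<in> P"
    then obtain X where "X \<in> B" using assms(3) by blast
    then have "X \<in> G" using assms(2) \<open>B \<in> P\<close> by blast
    then show "\<Union>B \<noteq> {}" using ne \<open>X \<in> B\<close> by blast
  qed
  have p1: "partition_on G P"
  proof (rule partition_onI)
    show "\<Union>P = G" by (rule assms(2))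
    show "{} \<notin> P" using assms(3) by blast
    fix p q assume "p \<in> P" "q \<in> P" "p \<noteq> q"
    then have d: "\<Union>p \<inter> \<Union>q = {}" using assms(4) by (auto simp: cdisj_def)
    show "disjnt p q"
    proof (rule ccontr)
      assume "\<not> disjnt p q"
      then obtain X where "X \<in> p" "X \<in> q" by (auto simp: disjnt_def)
      then have "X \<in> G" using assms(2) \<open>p \<in> P\<close> by blast
      then show False using ne d \<open>X \<in> p\<close> \<open>X \<in> q\<close> by blast
    qed
  qed
  have ij: "inj_on Union P"
  proof (rule inj_onI)
    fix B C assume "B \<in> P" "C \<in> P" "\<Union>B = \<Union>C"
    show "B = C"
    proof (rule ccontr)
      assume "B \<noteq> C"
      then have "\<Union>B \<inter> \<Union>C = {}" using assms(4) \<open>B \<in> P\<close> \<open>C \<in> P\<close> by (auto simp: cdisj_def)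
      then show False using uB[OF \<open>B \<in> P\<close>] \<open>\<Union>B = \<Union>C\<close> by auto
    qed
  qed
  have p2: "partition_on (\<Union>G) (Union ` P)"
  proof (rule partition_onI)
    show "\<Union>(Union ` P) = \<Union>G" using assms(2) by auto
    show "{} \<notin> Union ` P" using uB by auto
    fix p q assume "p \<in> Union ` P" "q \<in> Union ` P" "p \<noteq> q"
    then show "disjnt p q" using assms(4) by (auto simp: cdisj_def disjnt_def)
  qed
  show ?thesis using p1 p2 ij by (simp add: hpartition_def)
qed

lemma hpart_single: "hypergraph G \<Longrightarrow> G \<noteq> {} \<Longrightarrow> hpartition G {G}"
  by (rule hpart_intro) (auto simp: cdisj_def)

lemma hconnected_empty: "hconnected {}"
  unfolding hconnected_def hpartition_def
  by (auto simp: partition_on_empty)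

lemma connected_if_carrier:
  assumes "hypergraph G" "\<Union>G \<in> G"
  shows "hconnected G"
proof -
  have Gne: "G \<noteq> {}" using assms(2) by auto
  have ne: "\<And>X. X \<in> G \<Longrightarrow> X \<noteq> {}" using assms(1) by (auto simp: hypergraph_def)
  have "P = {G}" if hp: "hpartition G P" for P
  proof -
    note pp = hpart_props[OF hp]
    obtain B where B: "B \<in> P" "\<Union>G \<in> B" using pp(1) assms(2) by blast
    have "C = B" if CP: "C \<in> P" for C
    proof (rule ccontr)
      assume "C \<noteq> B"
      then have d: "\<Union>C \<inter> \<Union>B = {}" using pp(3) CP B(1) by (auto simp: cdisj_def)
      obtain X where "X \<in> C" using pp(2) CP by blast
      then have "X \<in> G" using pp(1) CP by blast
      then have "X \<subseteq> \<Union>B" using B(2) by blast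
      then show False using d ne[OF \<open>X \<in> G\<close>] \<open>X \<in> C\<close> by blast
    qed
    then have "P = {B}" using B(1) by blast
    then show ?thesis using pp(1) by simp
  qed
  then show ?thesis using hpart_single[OF assms(1) Gne] unfolding hconnected_def by blast
qed

lemma sat_carrier:
  assumes "hypergraph H" "saturated H" "hconnected H" "H \<noteq> {}"
  shows "\<Union>H \<in> H"
proof -
  have fin: "finite H" using assms(1) by (simp add: hypergraph_def)
  have ne: "\<And>X. X \<in> H \<Longrightarrow> X \<noteq> {}" using assms(1) by (auto simp: hypergraph_def)
  define M where "M = {X\<in>H. \<forall>X'\<in>H. X \<subseteq> X' \<longrightarrow> X' = X}"
  have ex: "\<exists>m\<in>M. X \<subseteq> m" if "X \<in> H" for X
    using finite_has_maximal2[OF fin that] unfolding M_def by auto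
  have dj: "m1 \<inter> m2 = {}" if "m1 \<in> M" "m2 \<in> M" "m1 \<noteq> m2" for m1 m2
  proof (rule ccontr)
    assume "m1 \<inter> m2 \<noteq> {}"
    moreover have "m1 \<in> H" "m2 \<in> H" using that unfolding M_def by auto
    ultimately have u: "m1 \<union> m2 \<in> H" using assms(2) unfolding saturated_def by blast
    have "\<forall>X'\<in>H. m1 \<subseteq> X' \<longrightarrow> X' = m1" "\<forall>X'\<in>H. m2 \<subseteq> X' \<longrightarrow> X' = m2"
      using that unfolding M_def by auto
    then have "m1 \<union> m2 = m1" "m1 \<union> m2 = m2" using u by auto
    then show False using that(3) by auto
  qed
  define P where "P = (\<lambda>m. restr H m) ` M"
  have uR: "\<Union>(restr H m) = m" if "m \<in> M" for m using that unfolding M_def restr_def by auto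
  have hp: "hpartition H P"
  proof (rule hpart_intro[OF assms(1)])
    show "\<Union>P = H" unfolding P_def restr_def using ex M_def by auto
    show "\<And>B. B \<in> P \<Longrightarrow> B \<noteq> {}" unfolding P_def restr_def M_def by auto
    show "cdisj P" unfolding cdisj_def
    proof (intro ballI impI)
      fix B C assume "B \<in> P" "C \<in> P" "B \<noteq> C"
      then obtain m1 m2 where "m1 \<in> M" "m2 \<in> M" "B = restr H m1" "C = restr H m2"
        unfolding P_def by blast
      then show "\<Union>B \<inter> \<Union>C = {}" using uR dj \<open>B \<noteq> C\<close> by metis
    qed
  qed
  then have "P = {H}" using hpart_single[OF assms(1) assms(4)] assms(3) unfolding hconnected_def by blast
  then obtain m where "m \<in> M" "restr H m = H" unfolding P_def by (metis imageE insertI1)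
  then have "\<Union>H = m" using uR by metis
  then show ?thesis using \<open>m \<in> M\<close> unfolding M_def by auto
qed


lemma constr_hyp: "construction H K \<Longrightarrow> hypergraph H \<and> atomic H"
  by (induction rule: construction.induct) (auto simp: hypergraph_def atomic_def)

lemma constr_sub: "construction H K \<Longrightarrow> \<forall>k\<in>K. k \<noteq> {} \<and> k \<subseteq> \<Union>H"
proof (induction rule: construction.induct)
  case empty then show ?case by simp
next
  case (conn H x K) then show ?case by (auto simp: restr_def)
next
  case (split H P Kf)
  have "\<Union>P = H" using split.hyps(4) hpart_props(1) by (auto simp: finest_hpartition_def)
  then show ?case using split.IH by blast
qed

lemma trace_hyp: "hypergraph H \<Longrightarrow> hypergraph (trace Z H)"
proof -
  assume h: "hypergraph H"
  have "trace Z H = (\<lambda>X. X \<inter> Z) ` {X \<in> H. X \<inter> Z \<noteq> {}}" by (auto simp: trace_def)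
  then have "finite (trace Z H)" using h by (simp add: hypergraph_def)
  then show ?thesis using h by (auto simp: hypergraph_def trace_def)
qed

lemma Union_trace: "\<Union>(trace Z H) = \<Union>H \<inter> Z"
  by (auto simp: trace_def)

lemma trace_atomic: "atomic H \<Longrightarrow> atomic (trace Z H)"
  unfolding atomic_def trace_def by auto

lemma trace_sat: "saturated H \<Longrightarrow> saturated (trace Z H)"
  unfolding saturated_def trace_def
proof (clarify)
  fix X1 X2
  assume s: "\<forall>X1\<in>H. \<forall>X2\<in>H. X1 \<inter> X2 \<noteq> {} \<longrightarrow> X1 \<union> X2 \<in> H"
    and a: "X1 \<in> H" "X1 \<inter> Z \<noteq> {}" "X2 \<in> H" "X2 \<inter> Z \<noteq> {}" "X1 \<inter> Z \<inter> (X2 \<inter> Z) \<noteq> {}"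
  then have "X1 \<union> X2 \<in> H" by blast
  moreover have "X1 \<inter> Z \<union> X2 \<inter> Z = (X1 \<union> X2) \<inter> Z" by blast
  ultimately show "\<exists>X. X1 \<inter> Z \<union> X2 \<inter> Z = X \<inter> Z \<and> X \<in> H \<and> X \<inter> Z \<noteq> {}" using a by blast
qed

lemma trace_ASC: "ASC H \<Longrightarrow> ASC (trace Z H)"
proof -
  assume a: "ASC H"
  then have h: "hypergraph H" "atomic H" "saturated H" "hconnected H" by (auto simp: ASC_def)
  have "hconnected (trace Z H)"
  proof (cases "\<Union>H \<inter> Z = {}")
    case True
    then have "trace Z H = {}" by (auto simp: trace_def)
    then show ?thesis by (simp add: hconnected_empty)
  next
    case False
    then have "H \<noteq> {}" by auto
    then have "\<Union>H \<in> H" using sat_carrier h by blast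
    then have "\<Union>H \<inter> Z \<in> trace Z H" using False by (auto simp: trace_def)
    then show ?thesis using connected_if_carrier trace_hyp[OF h(1)] Union_trace by metis
  qed
  then show ?thesis using h by (simp add: ASC_def trace_hyp trace_atomic trace_sat)
qed

lemma restr_props:
  assumes "hypergraph H" "atomic H" "saturated H"
  shows "hypergraph (restr H S)" "atomic (restr H S)" "saturated (restr H S)"
  using assms unfolding hypergraph_def atomic_def saturated_def restr_def by auto

lemma Union_restr: "atomic H \<Longrightarrow> \<Union>(restr H (\<Union>H - {x})) = \<Union>H - {x}"
  unfolding atomic_def restr_def by blast

lemma block_props:
  assumes "hypergraph H" "atomic H" "saturated H" "finest_hpartition H P" "B \<in> P"
  shows "hypergraph B" "atomic B" "saturated B" "hconnected B"
proof -
  have hp: "hpartition H P" and cB: "hconnected B" using assms(4,5) by (auto simp: finest_hpartition_def)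
  note pp = hpart_props[OF hp]
  have BH: "B \<subseteq> H" using pp(1) assms(5) by blast
  have ne: "\<And>X. X \<in> H \<Longrightarrow> X \<noteq> {}" using assms(1) by (auto simp: hypergraph_def)
  have inB: "X \<in> B" if XH: "X \<in> H" and XB: "X \<inter> \<Union>B \<noteq> {}" for X
  proof -
    obtain C where C: "C \<in> P" "X \<in> C" using pp(1) XH by blast
    show ?thesis
    proof (cases "C = B")
      case True then show ?thesis using C by simp
    next
      case False
      then have "\<Union>C \<inter> \<Union>B = {}" using pp(3) C(1) assms(5) by (auto simp: cdisj_def)
      then show ?thesis using C(2) XB by blast
    qed
  qed
  show "hypergraph B" using assms(1) BH unfolding hypergraph_def by (meson finite_subset subsetD)
  show "atomic B" unfolding atomic_def
  proof
    fix x assume "x \<in> \<Union>B"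
    then have "{x} \<in> H" using assms(2) BH unfolding atomic_def by blast
    then show "{x} \<in> B" using inB \<open>x \<in> \<Union>B\<close> by blast
  qed
  show "saturated B" unfolding saturated_def
  proof (intro ballI impI)
    fix X1 X2 assume "X1 \<in> B" "X2 \<in> B" "X1 \<inter> X2 \<noteq> {}"
    then have "X1 \<union> X2 \<in> H" using assms(3) BH unfolding saturated_def by blast
    moreover have "(X1 \<union> X2) \<inter> \<Union>B \<noteq> {}" using \<open>X1 \<in> B\<close> ne BH by blast
    ultimately show "X1 \<union> X2 \<in> B" using inB by blast
  qed
  show "hconnected B" by (rule cB)
qed

lemma union_constr:
  assumes "hypergraph G" "atomic G" "finite P" "\<Union>P = G" "\<And>B. B \<in> P \<Longrightarrow> B \<noteq> {}"
    "cdisj P" "\<And>B. B \<in> P \<Longrightarrow> hconnected B" "\<And>B. B \<in> P \<Longrightarrow> construction B (Kf B)"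
  shows "construction G (\<Union>B\<in>P. Kf B)"
proof -
  consider "card P = 0" | "card P = 1" | "card P \<ge> 2" by linarith
  then show ?thesis
  proof cases
    case 1
    then have "P = {}" using assms(3) by simp
    then show ?thesis using assms(4) construction.empty by simp
  next
    case 2
    then obtain B where "P = {B}" using card_1_singletonE by blast
    then have "G = B" using assms(4) by simp
    then show ?thesis using assms(8) \<open>P = {B}\<close> by simp
  next
    case 3
    have hp: "hpartition G P" by (rule hpart_intro[OF assms(1,4,5,6)])
    have "P \<noteq> {}" using 3 by auto
    then obtain B where "B \<in> P" by blast
    then have "G \<noteq> {}" using assms(4,5) by blast
    then have hp1: "hpartition G {G}" using hpart_single assms(1) by blast
    have "P \<noteq> {G}" using 3 by auto
    then have nc: "\<not> hconnected G" using hp hp1 unfolding hconnected_def by blast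
    have fp: "finest_hpartition G P" using hp assms(7) by (simp add: finest_hpartition_def)
    show ?thesis by (rule construction.split[OF assms(1,2) nc fp 3]) (simp add: assms(8))
  qed
qed


lemma trace_split:
  assumes "\<forall>B\<in>P. \<forall>X\<in>F B. X \<noteq> {} \<and> X \<subseteq> c B"
    "\<forall>B\<in>P. \<forall>C\<in>P. B \<noteq> C \<longrightarrow> c B \<inter> c C = {}"
    "Hj \<in> P" "Y \<subseteq> c Hj" "\<forall>B\<in>P. c B \<subseteq> W"
  shows "trace (W - Y) (\<Union>B\<in>P. F B) = trace (c Hj - Y) (F Hj) \<union> (\<Union>B\<in>P-{Hj}. F B)"
proof (rule set_eqI, rule iffI)
  fix U assume "U \<in> trace (W - Y) (\<Union>B\<in>P. F B)"
  then obtain X B where X: "U = X \<inter> (W - Y)" "B \<in> P" "X \<in> F B" "X \<inter> (W - Y) \<noteq> {}"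
    unfolding trace_def by blast
  have XB: "X \<subseteq> c B" "X \<noteq> {}" using assms(1) X(2,3) by auto
  show "U \<in> trace (c Hj - Y) (F Hj) \<union> (\<Union>B\<in>P-{Hj}. F B)"
  proof (cases "B = Hj")
    case True
    then have "U = X \<inter> (c Hj - Y)" using X(1) XB assms(5) X(2) by blast
    then show ?thesis using X True unfolding trace_def by blast
  next
    case False
    then have "c B \<inter> c Hj = {}" using assms(2,3) X(2) by blast
    then have "U = X" using X(1) XB assms(4,5) X(2) by blast
    then show ?thesis using X False by blast
  qed
next
  fix U assume "U \<in> trace (c Hj - Y) (F Hj) \<union> (\<Union>B\<in>P-{Hj}. F B)"
  then show "U \<in> trace (W - Y) (\<Union>B\<in>P. F B)"
  proof
    assume "U \<in> trace (c Hj - Y) (F Hj)"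
    then obtain X where X: "U = X \<inter> (c Hj - Y)" "X \<in> F Hj" "X \<inter> (c Hj - Y) \<noteq> {}"
      unfolding trace_def by blast
    have "X \<subseteq> c Hj" using assms(1,3) X(2) by auto
    then have "U = X \<inter> (W - Y)" using X(1) assms(3,5) by blast
    then show ?thesis using X assms(3) unfolding trace_def by blast
  next
    assume "U \<in> (\<Union>B\<in>P-{Hj}. F B)"
    then obtain B where B: "B \<in> P" "B \<noteq> Hj" "U \<in> F B" by blast
    have XB: "U \<subseteq> c B" "U \<noteq> {}" using assms(1) B by auto
    have "c B \<inter> c Hj = {}" using assms(2,3) B by blast
    then have "U = U \<inter> (W - Y)" using XB assms(4,5) B(1) by blast
    then show ?thesis using B XB unfolding trace_def by blast
  qed
qed

lemma cdisj_insert: "cdisj Q \<Longrightarrow> (\<And>C. C \<in> Q \<Longrightarrow> \<Union>T \<inter> \<Union>C = {}) \<Longrightarrow> cdisj (insert T Q)"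
  unfolding cdisj_def by blast

lemma cdisj_subset: "cdisj Q \<Longrightarrow> R \<subseteq> Q \<Longrightarrow> cdisj R"
  unfolding cdisj_def by blast

lemma trace_empty: "trace {} F = {}"
  by (simp add: trace_def)

lemma main:
  "construction H L \<Longrightarrow> saturated H \<Longrightarrow> Y \<in> L \<Longrightarrow>
   construction (trace (\<Union>H - Y) H) (trace (\<Union>H - Y) L)"
proof (induction arbitrary: Y rule: construction.induct)
  case empty then show ?case by simp
next
  case (conn H x K)
  show ?case
  proof (cases "Y = \<Union>H")
    case True
    then show ?thesis by (simp add: trace_empty construction.empty)
  next
    case False
    then have YK: "Y \<in> K" using conn.prems(2) by simp
    define H' where "H' = restr H (\<Union>H - {x})"
    define Z where "Z = \<Union>H - Y"
    define Z' where "Z' = \<Union>H' - Y"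
    have uH': "\<Union>H' = \<Union>H - {x}" unfolding H'_def by (rule Union_restr[OF conn.hyps(2)])
    have satH': "saturated H'" using restr_props conn.hyps(1,2) conn.prems(1) unfolding H'_def by blast
    have Ksub: "\<forall>k\<in>K. k \<noteq> {} \<and> k \<subseteq> \<Union>H'" using constr_sub conn.hyps(5) unfolding H'_def by blast
    have xZ: "x \<in> Z" using Ksub YK conn.hyps(4) uH' unfolding Z_def by blast
    have Z'eq: "Z' = Z - {x}" unfolding Z'_def Z_def uH' by blast
    have IH: "construction (trace Z' H') (trace Z' K)"
      using conn.IH[OF satH'[unfolded H'_def] YK] unfolding Z'_def H'_def .
    define T where "T = trace Z H"
    have hT: "hypergraph T" unfolding T_def by (rule trace_hyp[OF conn.hyps(1)])
    have aT: "atomic T" unfolding T_def by (rule trace_atomic[OF conn.hyps(2)])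
    have uT: "\<Union>T = Z" unfolding T_def Union_trace Z_def by blast
    have "H \<noteq> {}" using conn.hyps(4) by auto
    then have "\<Union>H \<in> H" using sat_carrier conn.hyps(1,3) conn.prems(1) by blast
    then have ZT: "Z \<in> T" using xZ unfolding T_def trace_def Z_def by blast
    have cT: "hconnected T" using connected_if_carrier[OF hT] ZT uT by simp
    have e1: "restr T (\<Union>T - {x}) = trace Z' H'"
    proof (rule set_eqI, rule iffI)
      fix U assume "U \<in> restr T (\<Union>T - {x})"
      then obtain X where X: "X \<in> H" "U = X \<inter> Z" "U \<noteq> {}" "U \<subseteq> Z - {x}"
        unfolding restr_def uT T_def trace_def by blast
      have "x \<notin> X" using X(2,4) xZ by blast
      moreover have "X \<subseteq> \<Union>H" using X(1) by blast
      ultimately have "X \<in> H'" "U = X \<inter> Z'" using X unfolding H'_def restr_def Z'eq by blast+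
      then show "U \<in> trace Z' H'" using X(3) unfolding trace_def by blast
    next
      fix U assume "U \<in> trace Z' H'"
      then obtain X where X: "X \<in> H'" "U = X \<inter> Z'" "U \<noteq> {}"
        unfolding trace_def by blast
      have "X \<in> H" "x \<notin> X" using X(1) unfolding H'_def restr_def by blast+
      then have "U = X \<inter> Z" using X(2) Z'eq by blast
      then show "U \<in> restr T (\<Union>T - {x})" using \<open>X \<in> H\<close> X(3) Z'eq X(2)
        unfolding restr_def uT T_def trace_def by blast
    qed
    have e2: "trace Z K = trace Z' K"
    proof -
      have "k \<inter> Z = k \<inter> Z'" if "k \<in> K" for k using Ksub that uH' Z'eq by blast
      then show ?thesis unfolding trace_def by (metis (no_types, lifting))
    qed
    have e3: "trace Z (insert (\<Union>H) K) = insert Z (trace Z K)"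
      using xZ unfolding trace_def Z_def by blast
    have "construction T (insert (\<Union>T) (trace Z K))"
      by (rule construction.conn[OF hT aT cT]) (use xZ uT e1 e2 IH in auto)
    then show ?thesis using uT e3 unfolding T_def Z_def by simp
  qed
next
  case (split H P Kf)
  have hp: "hpartition H P" using split.hyps(4) by (simp add: finest_hpartition_def)
  note pp = hpart_props[OF hp]
  have finP: "finite P"
  proof -
    have "finite H" using split.hyps(1) by (simp add: hypergraph_def)
    then have "finite (Pow H)" by simp
    moreover have "P \<subseteq> Pow H" using pp(1) by blast
    ultimately show ?thesis using finite_subset by blast
  qed
  have cons: "\<And>B. B \<in> P \<Longrightarrow> construction B (Kf B)" using split.IH by blast
  obtain Hj where Hj: "Hj \<in> P" "Y \<in> Kf Hj" using split.prems(2) by blast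
  have bj: "hypergraph Hj" "atomic Hj" "saturated Hj" "hconnected Hj"
    using block_props[OF split.hyps(1,2) split.prems(1) split.hyps(4) Hj(1)] by auto
  have IHj: "construction (trace (\<Union>Hj - Y) Hj) (trace (\<Union>Hj - Y) (Kf Hj))"
    using split.IH Hj bj(3) by blast
  have Ysub: "Y \<subseteq> \<Union>Hj" using constr_sub[OF cons[OF Hj(1)]] Hj(2) by blast
  have cd: "\<forall>B\<in>P. \<forall>C\<in>P. B \<noteq> C \<longrightarrow> \<Union>B \<inter> \<Union>C = {}" using pp(3) by (simp add: cdisj_def)
  have sub: "\<forall>B\<in>P. \<Union>B \<subseteq> \<Union>H" using pp(1) by blast
  have neH: "\<forall>B\<in>P. \<forall>X\<in>B. X \<noteq> {} \<and> X \<subseteq> \<Union>B"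
    using pp(1) split.hyps(1) unfolding hypergraph_def by blast
  have neK: "\<forall>B\<in>P. \<forall>X\<in>Kf B. X \<noteq> {} \<and> X \<subseteq> \<Union>B"
    using constr_sub cons by blast
  define Zj where "Zj = \<Union>Hj - Y"
  define Tj where "Tj = trace Zj Hj"
  define P0 where "P0 = P - {Hj}"
  have tH: "trace (\<Union>H - Y) H = Tj \<union> \<Union>P0"
    using trace_split[where F="\<lambda>B. B" and c=Union, OF neH cd Hj(1) Ysub sub] pp(1)
    unfolding Tj_def Zj_def P0_def by simp
  have tL: "trace (\<Union>H - Y) (\<Union>B\<in>P. Kf B) = trace Zj (Kf Hj) \<union> (\<Union>B\<in>P0. Kf B)"
    using trace_split[where F=Kf and c=Union, OF neK cd Hj(1) Ysub sub]
    unfolding Tj_def Zj_def P0_def by simp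
  define G where "G = trace (\<Union>H - Y) H"
  have hG: "hypergraph G" unfolding G_def by (rule trace_hyp[OF split.hyps(1)])
  have aG: "atomic G" unfolding G_def by (rule trace_atomic[OF split.hyps(2)])
  have finP0: "finite P0" using finP unfolding P0_def by simp
  have ne0: "\<And>B. B \<in> P0 \<Longrightarrow> B \<noteq> {}" using pp(2) unfolding P0_def by blast
  have cd0: "cdisj P0" using cdisj_subset[OF pp(3)] unfolding P0_def by blast
  have hc0: "\<And>B. B \<in> P0 \<Longrightarrow> hconnected B" using split.hyps(4) unfolding P0_def finest_hpartition_def by blast
  have cons0: "\<And>B. B \<in> P0 \<Longrightarrow> construction B (Kf B)" using cons unfolding P0_def by blast
  have uTj: "\<Union>Tj \<subseteq> \<Union>Hj" unfolding Tj_def Union_trace by blast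
  show ?case
  proof (cases "Tj = {}")
    case True
    then have "Zj = {}" unfolding Tj_def Union_trace[symmetric] Zj_def by (metis Diff_subset Union_empty Union_trace inf.absorb_iff2)
    then have tL': "trace (\<Union>H - Y) (\<Union>B\<in>P. Kf B) = (\<Union>B\<in>P0. Kf B)" using tL by (simp add: trace_empty)
    have "G = \<Union>P0" using tH True unfolding G_def by simp
    then have "construction G (\<Union>B\<in>P0. Kf B)"
      using union_constr[OF hG aG finP0 _ ne0 cd0 hc0 cons0] by simp
    then show ?thesis using tL' unfolding G_def by simp
  next
    case False
    have dj: "\<Union>Tj \<inter> \<Union>C = {}" if CP: "C \<in> P0" for C
    proof -
      have "C \<in> P" "C \<noteq> Hj" using CP unfolding P0_def by auto
      then have "\<Union>Hj \<inter> \<Union>C = {}" using cd Hj(1) by metis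
      then show ?thesis using uTj by blast
    qed
    have hTj: "hypergraph Tj" unfolding Tj_def by (rule trace_hyp[OF bj(1)])
    have "\<Union>Tj \<noteq> {}" using False hTj unfolding hypergraph_def by blast
    then have TjP0: "Tj \<notin> P0" using dj by blast
    define P' where "P' = insert Tj P0"
    define Kf' where "Kf' = (\<lambda>B. if B = Tj then trace Zj (Kf Hj) else Kf B)"
    have ASCj: "ASC Hj" using bj by (simp add: ASC_def)
    have "construction G (\<Union>B\<in>P'. Kf' B)"
    proof (rule union_constr[OF hG aG])
      show "finite P'" using finP0 unfolding P'_def by simp
      show "\<Union>P' = G" using tH unfolding P'_def G_def by simp
      show "\<And>B. B \<in> P' \<Longrightarrow> B \<noteq> {}" using ne0 False unfolding P'_def by blast
      show "cdisj P'" unfolding P'_def by (rule cdisj_insert[OF cd0 dj])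
      show "\<And>B. B \<in> P' \<Longrightarrow> hconnected B"
        using hc0 trace_ASC[OF ASCj, of Zj] unfolding P'_def Tj_def ASC_def by blast
      show "\<And>B. B \<in> P' \<Longrightarrow> construction B (Kf' B)"
        using cons0 IHj TjP0 unfolding P'_def Kf'_def Tj_def Zj_def by auto
    qed
    moreover have "(\<Union>B\<in>P'. Kf' B) = trace Zj (Kf Hj) \<union> (\<Union>B\<in>P0. Kf B)"
      using TjP0 unfolding P'_def Kf'_def by auto
    ultimately show ?thesis using tL unfolding G_def by simp
  qed
qed


theorem proposition7p4:
  fixes H L :: "'a set set" and Y Z :: "'a set"
  assumes "ASC H"
    and "construction H L"
    and "Y \<in> L"
    and "Z = \<Union>H - Y"
  shows "ASC (trace Z H) \<and> construction (trace Z H) (trace Z L)"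
proof
  show "ASC (trace Z H)" by (rule trace_ASC[OF assms(1)])
  have "saturated H" using assms(1) by (simp add: ASC_def)
  then show "construction (trace Z H) (trace Z L)" using main[OF assms(2) _ assms(3)] assms(4) by simp
qed

end
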